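(* Let $w(\tau):=\left(e^{-3\tau}-\dfrac{4e^{-6\tau}}{(e^{-\tau}+1)^3}\right)1_{(0,\infty)}(\tau)$ for $\tau\in\mathbb{R}$. Then the Fourier transform $\hat w(\xi)=\int_{\mathbb{R}}w(\tau)e^{-i\xi\tau}\,d\tau$ has no zeroes on $\mathbb{R}$. *)

theory Defs
  imports "HOL-Analysis.Analysis"
begin

definition w :: "real \<Rightarrow> real" where
  "w \<tau> = (if \<tau> \<in> {0<..} then exp (-3*\<tau>) - 4 * exp (-6*\<tau>) / (exp (-\<tau>) + 1)^3 else 0)"

definition fourier_transform :: "(real \<Rightarrow> real) \<Rightarrow> real \<Rightarrow> complex" where
  "fourier_transform f \<xi> = (\<integral>\<tau>. complex_of_real (f \<tau>) * exp (- \<i> * complex_of_real (\<xi> * \<tau>)) \<partial>lborel)"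

end

theory Submission
  imports Defs
begin

lemma exp_int: "set_integrable lborel {0<..} (\<lambda>x::real. exp (- x))"
proof -
  have "set_integrable lborel (einterval 0 \<infinity>) (\<lambda>x::real. exp (- x))"
  proof (rule interval_integral_FTC_nonneg(1)[where F="\<lambda>x. - exp (- x)" and A="-1" and B=0])
    show "((( \<lambda>x. - exp (- x)) \<circ> real_of_ereal) \<longlongrightarrow> -1) (at_right 0)"
      by (auto simp: zero_ereal_def ereal_tendsto_simps intro!: tendsto_eq_intros)
    show "(((\<lambda>x. - exp (- x)) \<circ> real_of_ereal) \<longlongrightarrow> 0) (at_left \<infinity>)"
      unfolding ereal_tendsto_simps
      using exp_at_bot filterlim_compose filterlim_uminus_at_bot_at_top tendsto_minus by fastforce
  qed (auto intro!: derivative_eq_intros)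
  then show ?thesis by (simp add: interval_lebesgue_integral_0_infty(1)[symmetric] interval_lebesgue_integrable_def)
qed

definition q :: "real \<Rightarrow> real" where
  "q x = x^3 - 4 * x^6 / (x + 1)^3"
definition q' :: "real \<Rightarrow> real" where
  "q' x = 3 * x^2 - 24 * x^5 / (x + 1)^3 + 12 * x^6 / (x + 1)^4"
definition g :: "real \<Rightarrow> real" where "g t = q (exp (- t))"
definition g' :: "real \<Rightarrow> real" where "g' t = - exp (- t) * q' (exp (- t))"

lemma q_deriv: assumes "x > -1" shows "(q has_real_derivative q' x) (at x)"
proof -
  have "(q has_real_derivative
     3 * x^2 - (24 * x^5 * (x+1)^3 - 4 * x^6 * (3 * (x+1)^2)) / ((x+1)^3)^2) (at x)"
    unfolding q_def using assms
    by (auto intro!: derivative_eq_intros simp: power2_eq_square)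
  moreover have "3 * x^2 - (24 * x^5 * (x+1)^3 - 4 * x^6 * (3 * (x+1)^2)) / ((x+1)^3)^2 = q' x"
    using assms unfolding q'_def by (simp add: field_simps)
  ultimately show ?thesis by simp
qed

lemma g_deriv: "(g has_real_derivative g' t) (at t)"
proof -
  have "((\<lambda>t. q (exp (- t))) has_real_derivative q' (exp (-t)) * (exp (-t) * -1)) (at t)"
    by (rule DERIV_chain2[OF q_deriv], smt (verit) exp_gt_zero) (auto intro!: derivative_eq_intros simp: add_pos_pos)
  then show ?thesis unfolding g_def[abs_def] g'_def by (simp add: mult.commute)
qed


lemma q_pos: assumes "0 < x" "x < 1" shows "q x > 0"
proof -
  have "2*x < x + 1" using assms by simp
  hence "(2*x)^3 < (x+1)^3" using assms by (intro power_strict_mono) auto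
  hence "4 * x^3 < (x+1)^3" using assms by (simp add: power_mult_distrib) (smt (verit) zero_less_power)
  hence "x^3 * (4 * x^3) < x^3 * (x+1)^3" using assms by (intro mult_strict_left_mono) auto
  hence "4 * x^6 < x^3 * (x+1)^3" by (simp add: power_eq_if)
  thus ?thesis using assms unfolding q_def by (simp add: field_simps)
qed

lemma q'_pos: assumes "0 < x" "x < 1" shows "q' x > 0"
proof -
  have p: "3 * (x+1)^4 - 24 * x^3 * (x+1) + 12 * x^4 > 0"
  proof -
    have "x^3 < x" using power_strict_decreasing[of 1 3 x] assms by simp
    have "x^4 < x^2" using power_strict_decreasing[of 2 4 x] assms by simp
    have "3 * (x+1)^4 - 24 * x^3 * (x+1) + 12 * x^4 = 3 + 12*x + 18*x^2 - 12*x^3 - 9*x^4"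
      by (simp add: algebra_simps power_eq_if)
    moreover have "0 < x^2" using assms by simp
    ultimately show ?thesis using assms \<open>x^3 < x\<close> \<open>x^4 < x^2\<close> by linarith
  qed
  have "q' x = x^2 * (3 * (x+1)^4 - 24 * x^3 * (x+1) + 12 * x^4) / (x+1)^4"
    using assms unfolding q'_def by (simp add: field_simps) (simp add: algebra_simps power_eq_if)
  thus ?thesis using p assms by simp
qed

lemma q_bound: assumes "0 < x" "x \<le> 1" shows "\<bar>q x\<bar> \<le> 5 * x"
proof -
  have d: "1 \<le> (x+1)^3" using assms by simp
  have "0 \<le> x^6 / (x+1)^3" using assms by simp
  moreover have "x^6 / (x+1)^3 \<le> x^6" using d assms by (simp add: divide_le_eq)
  moreover have "x^6 \<le> x" using power_decreasing[of 1 6 x] assms by simp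
  moreover have "x^3 \<le> x" using power_decreasing[of 1 3 x] assms by simp
  moreover have "0 \<le> x^3" using assms by simp
  ultimately show ?thesis unfolding q_def by linarith
qed

lemma q'_bound: assumes "0 < x" "x \<le> 1" shows "\<bar>q' x\<bar> \<le> 39"
proof -
  have d3: "1 \<le> (x+1)^3" and d4: "1 \<le> (x+1)^4" using assms by simp_all
  have a: "0 \<le> x^5 / (x+1)^3" "0 \<le> x^6 / (x+1)^4" using assms by simp_all
  have "x^5 / (x+1)^3 \<le> x^5" using d3 assms by (simp add: divide_le_eq)
  moreover have "x^6 / (x+1)^4 \<le> x^6" using d4 assms by (simp add: divide_le_eq)
  moreover have "x^6 \<le> 1" "x^5 \<le> 1" "x^2 \<le> 1" "0 \<le> x^2" using assms by (simp_all add: power_le_one)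
  ultimately show ?thesis using a unfolding q'_def by linarith
qed


lemma exp_in01: "t > 0 \<Longrightarrow> 0 < exp (- t) \<and> exp (- t) < (1::real)"
  by simp

lemma g_pos: "t > 0 \<Longrightarrow> g t > 0"
  unfolding g_def using q_pos exp_in01 by blast

lemma g'_neg: "t > 0 \<Longrightarrow> g' t < 0"
  unfolding g'_def using q'_pos[of "exp (-t)"] exp_in01[of t] by (simp add: mult_pos_pos)

lemma g_bound: "t \<ge> 0 \<Longrightarrow> \<bar>g t\<bar> \<le> 5 * exp (- t)"
  unfolding g_def by (rule q_bound) auto

lemma g'_bound: "t \<ge> 0 \<Longrightarrow> \<bar>g' t\<bar> \<le> 39 * exp (- t)"
proof -
  assume "t \<ge> 0"
  hence "\<bar>q' (exp (-t))\<bar> \<le> 39" by (intro q'_bound) auto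
  thus ?thesis unfolding g'_def by (simp add: abs_mult mult.commute mult_right_mono)
qed

lemma g_cont: "isCont g t"
  using g_deriv DERIV_isCont by blast

lemma g'_cont: "isCont g' t"
proof -
  have "exp (- t) + 1 \<noteq> 0" by (smt (verit) exp_gt_zero)
  thus ?thesis unfolding g'_def[abs_def] q'_def by (auto intro!: continuous_intros)
qed

lemma w_eq: "t > 0 \<Longrightarrow> w t = g t"
proof -
  assume "t > 0"
  have e: "exp (- (real k * t)) = exp (- t) ^ k" for k
    by (metis exp_of_nat_mult mult_minus_right)
  have "exp (-3*t) = exp (-t)^3" "exp (-6*t) = exp (-t)^6"
    using e[of 3] e[of 6] by simp_all
  thus ?thesis using \<open>t > 0\<close> unfolding w_def g_def q_def by (simp add: add.commute)
qed

lemma pos_integral: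
  fixes h :: "real \<Rightarrow> real"
  assumes cont: "\<And>x. isCont h x" and nn: "\<And>x. x > 0 \<Longrightarrow> h x \<ge> 0"
    and int: "set_integrable lborel {0<..} h" and t0: "t0 > 0" "h t0 > 0"
  shows "(LINT x:{0<..}|lborel. h x) > 0"
proof -
  have hk: "h integrable_on {0<..}" "(LINT x:{0<..}|lborel. h x) = integral {0<..} h"
    using set_borel_integral_eq_integral[OF int] by auto
  let ?C = "cbox (t0/2) (t0+1)"
  have sub: "?C \<subseteq> {0<..}" using t0 by auto
  have cc: "continuous_on ?C h" using cont by (simp add: continuous_at_imp_continuous_on)
  have ic: "h integrable_on ?C" using cc integrable_continuous by blast
  have "integral ?C h \<le> integral {0<..} h"
    by (rule integral_subset_le[OF sub ic hk(1)]) (use nn in auto)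
  moreover have "integral {0<..} h \<ge> 0"
    by (rule integral_nonneg[OF hk(1)]) (use nn in auto)
  moreover have "integral ?C h \<noteq> 0"
  proof
    assume z: "integral ?C h = 0"
    have "h t0 = 0"
      apply (rule has_integral_0_cbox_imp_0[OF cc _ _ _, of t0])
      using nn t0 sub z integrable_integral[OF ic] by (auto simp: mem_box)
    thus False using t0 by simp
  qed
  moreover have "integral ?C h \<ge> 0"
    by (rule integral_nonneg[OF ic]) (use nn sub in auto)
  ultimately show ?thesis using hk by linarith
qed

lemma sbm: 
  fixes f :: "real \<Rightarrow> 'b::{banach, second_countable_topology}"
  assumes "\<And>x. isCont f x" "A \<in> sets borel"
  shows "set_borel_measurable lborel A f"
proof -
  have "f \<in> borel_measurable borel"
    by (rule borel_measurable_continuous_onI) (simp add: continuous_at_imp_continuous_on assms)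
  thus ?thesis unfolding set_borel_measurable_def
    by (intro borel_measurable_scaleR borel_measurable_indicator) (simp_all add: assms)
qed


lemma exp_neg_tendsto: "((\<lambda>t::real. exp (- t)) \<longlongrightarrow> 0) at_top"
  using exp_at_bot filterlim_compose filterlim_uminus_at_bot_at_top by blast

lemma einterval_0_inf: "einterval 0 \<infinity> = {0::real<..}"
  by (auto simp: einterval_def zero_ereal_def)

theorem proposition4p2:
  fixes \<xi> :: real
  shows "fourier_transform w \<xi> \<noteq> 0"
proof -
  define E where "E t = exp (- \<i> * complex_of_real (\<xi> * t))" for t
  have FT: "fourier_transform w \<xi> = (LINT t:{0<..}|lborel. complex_of_real (g t) * E t)"
  proof -
    have "complex_of_real (w t) * E t = indicator {0<..} t *\<^sub>R (complex_of_real (g t) * E t)" for t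
      by (cases "t > 0") (simp add: w_eq, simp add: w_def)
    thus ?thesis unfolding fourier_transform_def set_lebesgue_integral_def E_def by simp
  qed
  have nE: "norm (E t) = 1" for t unfolding E_def by simp
  have Econt: "isCont E t" for t unfolding E_def by (intro continuous_intros)
  have b5: "set_integrable lborel {0<..} (\<lambda>t. 5 * exp (- t) :: real)" using exp_int by simp
  have b78: "set_integrable lborel {0<..} (\<lambda>t. 78 * exp (- t) :: real)" using exp_int by simp
  have int1: "set_integrable lborel {0<..} (\<lambda>t. complex_of_real (g t) * E t)"
  proof (rule set_integrable_bound[OF b5])
    show "set_borel_measurable lborel {0<..} (\<lambda>t. complex_of_real (g t) * E t)"
      by (intro sbm continuous_intros g_cont Econt) auto
    show "AE x in lborel. x \<in> {0<..} \<longrightarrow> norm (complex_of_real (g x) * E x) \<le> norm (5 * exp (- x))"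
      by (intro AE_I2) (auto simp: norm_mult nE intro!: g_bound)
  qed
  show ?thesis
  proof (cases "\<xi> = 0")
    case True
    hence E1: "E t = 1" for t unfolding E_def by simp
    have intg: "set_integrable lborel {0<..} g"
    proof (rule set_integrable_bound[OF b5])
      show "set_borel_measurable lborel {0<..} g"
        by (intro sbm g_cont) auto
      show "AE x in lborel. x \<in> {0<..} \<longrightarrow> norm (g x) \<le> norm (5 * exp (- x))"
        by (intro AE_I2) (auto intro!: g_bound)
    qed
    have "(LINT x:{0<..}|lborel. g x) > 0"
      by (rule pos_integral[OF g_cont _ intg, of 1]) (auto intro: less_imp_le g_pos)
    thus ?thesis unfolding FT E1 by (simp add: set_integral_complex_of_real)
  next
    case False
    define c where "c = - \<i> * complex_of_real \<xi>"
    have c0: "c \<noteq> 0" using False unfolding c_def by simp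
    define F where "F t = complex_of_real (g t) * ((E t - 1) / c)" for t
    define f where "f t = complex_of_real (g t) * E t + complex_of_real (g' t) * ((E t - 1) / c)" for t
    have int2: "set_integrable lborel {0<..} (\<lambda>t. complex_of_real (g' t) * (E t - 1))"
    proof (rule set_integrable_bound[OF b78])
      show "set_borel_measurable lborel {0<..} (\<lambda>t. complex_of_real (g' t) * (E t - 1))"
        by (intro sbm continuous_intros g'_cont Econt) auto
      show "AE x in lborel. x \<in> {0<..} \<longrightarrow> norm (complex_of_real (g' x) * (E x - 1)) \<le> norm (78 * exp (- x))"
      proof (intro AE_I2 impI)
        fix x :: real assume "x \<in> {0<..}"
        have "norm (E x - 1) \<le> 2" using norm_triangle_ineq4[of "E x" 1] nE[of x] by simp
        moreover have "\<bar>g' x\<bar> \<le> 39 * exp (- x)" using \<open>x \<in> {0<..}\<close> by (intro g'_bound) auto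
        ultimately have "\<bar>g' x\<bar> * norm (E x - 1) \<le> 39 * exp (- x) * 2"
          by (intro mult_mono) auto
        thus "norm (complex_of_real (g' x) * (E x - 1)) \<le> norm (78 * exp (- x))"
          by (simp add: norm_mult)
      qed
    qed
    have int2': "set_integrable lborel {0<..} (\<lambda>t. complex_of_real (g' t) * ((E t - 1) / c))"
      using set_integrable_divide[OF int2, of c] by simp
    have dE1: "((\<lambda>t. (E t - 1) / c) has_vector_derivative E t) (at t)" for t
    proof -
      have "((\<lambda>z. (exp (- \<i> * (complex_of_real \<xi> * z)) - 1) / c) has_field_derivative E t)
              (at (complex_of_real t))"
        using c0 by (auto intro!: derivative_eq_intros simp: E_def c_def mult.commute[of _ \<i>])
      from has_vector_derivative_real_field[OF this, of UNIV] show ?thesis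
        by (simp add: E_def)
    qed
    have dF: "(F has_vector_derivative f t) (at t)" for t
      unfolding F_def[abs_def] f_def
      using has_vector_derivative_mult[OF has_vector_derivative_of_real[OF g_deriv] dE1] by simp
    have Fcont: "isCont F t" for t unfolding F_def using c0 by (intro continuous_intros g_cont Econt)
    have fcont: "isCont f t" for t unfolding f_def using c0 by (intro continuous_intros g_cont g'_cont Econt)
    have intf: "set_integrable lborel {0<..} f"
      unfolding f_def[abs_def] by (rule set_integral_add(1)[OF int1 int2'])
    have "(LBINT t=0..\<infinity>. f t) = 0 - 0"
    proof (rule interval_integral_FTC_integrable[where F=F])
      show "set_integrable lborel (einterval 0 \<infinity>) f" using intf by (simp add: einterval_0_inf)
      have "(F \<longlongrightarrow> F 0) (at 0)" using Fcont isCont_def by blast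
      hence "(F \<longlongrightarrow> 0) (at_right 0)" unfolding F_def E_def
        by (auto elim: tendsto_mono[OF at_le, rotated])
      thus "((F \<circ> real_of_ereal) \<longlongrightarrow> 0) (at_right 0)"
        by (simp add: zero_ereal_def ereal_tendsto_simps)
      have "(F \<longlongrightarrow> 0) at_top"
      proof (rule Lim_null_comparison)
        show "((\<lambda>t. 10 / \<bar>\<xi>\<bar> * exp (- t)) \<longlongrightarrow> 0) at_top"
          using tendsto_mult_right_zero[OF exp_neg_tendsto, of "10 / \<bar>\<xi>\<bar>"] by simp
        show "\<forall>\<^sub>F x in at_top. norm (F x) \<le> 10 / \<bar>\<xi>\<bar> * exp (- x)"
        proof (rule eventually_at_top_linorderI[of 0])
          fix x :: real assume "x \<ge> 0"
          have "norm (E x - 1) \<le> 2" using norm_triangle_ineq4[of "E x" 1] nE[of x] by simp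
          moreover have "\<bar>g x\<bar> \<le> 5 * exp (- x)" using \<open>x \<ge> 0\<close> by (intro g_bound) auto
          ultimately have "\<bar>g x\<bar> * norm (E x - 1) \<le> 5 * exp (- x) * 2"
            by (intro mult_mono) auto
          moreover have "norm c = \<bar>\<xi>\<bar>" unfolding c_def by (simp add: norm_mult)
          ultimately show "norm (F x) \<le> 10 / \<bar>\<xi>\<bar> * exp (- x)"
          proof -
            assume a: "\<bar>g x\<bar> * norm (E x - 1) \<le> 5 * exp (- x) * 2" "norm c = \<bar>\<xi>\<bar>"
            have "norm (F x) = \<bar>g x\<bar> * norm (E x - 1) / \<bar>\<xi>\<bar>"
              unfolding F_def using a(2) by (simp add: norm_mult norm_divide)
            also have "\<dots> \<le> 5 * exp (- x) * 2 / \<bar>\<xi>\<bar>" by (rule divide_right_mono[OF a(1)]) simp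
            finally show ?thesis by simp
          qed
        qed
      qed
      thus "((F \<circ> real_of_ereal) \<longlongrightarrow> 0) (at_left \<infinity>)"
        by (simp add: ereal_tendsto_simps)
    qed (auto intro: dF fcont)
    hence "(LINT t:{0<..}|lborel. f t) = 0"
      by (simp add: interval_lebesgue_integral_0_infty(2))
    hence sum0: "(LINT t:{0<..}|lborel. complex_of_real (g t) * E t)
       + (LINT t:{0<..}|lborel. complex_of_real (g' t) * (E t - 1)) / c = 0"
      unfolding f_def using set_integral_add(2)[OF int1 int2'] by simp
    show ?thesis
    proof
      assume "fourier_transform w \<xi> = 0"
      hence J0: "(LINT t:{0<..}|lborel. complex_of_real (g' t) * (E t - 1)) = 0"
        using sum0 c0 FT by simp
      define h where "h t = g' t * (cos (\<xi> * t) - 1)" for t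
      have "Re (LINT t:{0<..}|lborel. complex_of_real (g' t) * (E t - 1)) = (LINT t:{0<..}|lborel. h t)"
      proof -
        have "Re (LINT t:{0<..}|lborel. complex_of_real (g' t) * (E t - 1))
            = (LINT t:{0<..}|lborel. Re (complex_of_real (g' t) * (E t - 1)))"
          unfolding set_lebesgue_integral_def
          using integral_Re[OF int2[unfolded set_integrable_def]] by simp
        also have "\<dots> = (LINT t:{0<..}|lborel. h t)"
          unfolding h_def E_def by (simp add: Re_exp)
        finally show ?thesis .
      qed
      hence h0: "(LINT t:{0<..}|lborel. h t) = 0" using J0 by simp
      have inth: "set_integrable lborel {0<..} h"
      proof (rule set_integrable_bound[OF b78])
        show "set_borel_measurable lborel {0<..} h"
          unfolding h_def by (intro sbm continuous_intros g'_cont) auto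
        show "AE x in lborel. x \<in> {0<..} \<longrightarrow> norm (h x) \<le> norm (78 * exp (- x))"
        proof (intro AE_I2 impI)
          fix x :: real assume "x \<in> {0<..}"
          have "\<bar>cos (\<xi> * x) - 1\<bar> \<le> 2" using cos_ge_minus_one[of "\<xi>*x"] cos_le_one[of "\<xi>*x"] by linarith
          moreover have "\<bar>g' x\<bar> \<le> 39 * exp (- x)" using \<open>x \<in> {0<..}\<close> by (intro g'_bound) auto
          ultimately have "\<bar>g' x\<bar> * \<bar>cos (\<xi> * x) - 1\<bar> \<le> 39 * exp (- x) * 2"
            by (intro mult_mono) auto
          thus "norm (h x) \<le> norm (78 * exp (- x))" by (simp add: h_def abs_mult)
        qed
      qed
      define t0 where "t0 = pi / \<bar>\<xi>\<bar>"
      have t0p: "t0 > 0" using False unfolding t0_def by simp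
      have "cos (\<xi> * t0) = -1" using False unfolding t0_def
        by (cases "\<xi> > 0") auto
      hence "h t0 > 0" using g'_neg[OF t0p] unfolding h_def by simp
      moreover have "h x \<ge> 0" if "x > 0" for x
        using g'_neg[OF that] cos_le_one[of "\<xi>*x"] unfolding h_def by (simp add: mult_nonpos_nonpos)
      moreover have "isCont h x" for x unfolding h_def by (intro continuous_intros g'_cont)
      ultimately have "(LINT t:{0<..}|lborel. h t) > 0"
        using pos_integral[OF _ _ inth t0p] by blast
      thus False using h0 by simp
    qed
  qed
qed

end
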